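(* Let $r,d\ge 1$ be integers, $N=d2^r$, and let $F_1,F_2,\dots,F_{\binom{N}{d}}$ enumerate the $d$-element subsets of $[N]$. For $i\in[\binom{N}{d}]$ and $j\in[dr]$, let $\beta(i,j)$ be the $j$-th bit of the $dr$-bit binary representation of $i$ if $i\le 2^{dr}$, and $\beta(i,j)=\star$ otherwise. Define the partial concept class $\mathbb{H}_{r,d}=\{h_{i,j}\}$ on $[d(2^r+r)]$ by $h_{i,j}(x)=1$ if $x\in F_i$, $h_{i,j}(x)=0$ if $x\in[N]\setminus F_i$, $h_{i,j}(N+j)=\beta(i,j)$, and $h_{i,j}(x)=\star$ for all other $x$. Then $d\le\mathrm{LD}(\mathbb{H}_{r,d})\le d+1$, and the SOA disambiguation of $\mathbb{H}_{r,d}$ (with respect to the natural ordering of $[d(2^r+r)]$) shatters the set $\{N+1,\dots,N+dr\}$; in particular its VC dimension is at least $dr$.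
   Context: Littlestone dimension, VC dimension and shattering of a partial class $\mathbb{H}\subseteq\{0,1,\star\}^{[n]}$ are as usual (a set/tree is shattered if every $0/1$ pattern/leaf is realized by some concept taking the required $0/1$ values), with $\mathrm{LD}(\emptyset)=-1$. For $\vec b\in\{0,1,\star\}^k$, $\mathbb{H}|_{\vec b}=\{h\in\mathbb{H}:h(i)=b_i\ \forall i\in[k]\}$. The SOA disambiguation is produced iteratively: for $k=1,\dots,n$, given the current class (values at $1,\dots,k-1$ already in $\{0,1\}$), for every $\vec b\in\{0,1\}^{k-1}$ choose $c\in\{0,1\}$ maximizing $\mathrm{LD}(\mathbb{H}|_{\vec b c})$ (ties broken toward $c=0$) and set $h(k):=c$ for every $h\in\mathbb{H}|_{\vec b\star}$; the final total class is the SOA disambiguation. *)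

theory Defs
  imports Main
begin

text \<open>Values of a partial concept: 0, 1, or undefined (star).
  A partial concept on the domain [n] = {1..n} is a function nat => pval;
  points outside the domain carry Star.\<close>
datatype pval = P0 | P1 | Star

type_synonym pconcept = "nat \<Rightarrow> pval"

datatype mtree = Leaf | Node nat mtree mtree

fun complete_depth :: "mtree \<Rightarrow> nat \<Rightarrow> bool" where
  "complete_depth Leaf k \<longleftrightarrow> k = 0"
| "complete_depth (Node x l r) k \<longleftrightarrow>
     (k > 0 \<and> complete_depth l (k - 1) \<and> complete_depth r (k - 1))"

fun shatters_tree :: "nat set \<Rightarrow> pconcept set \<Rightarrow> mtree \<Rightarrow> bool" where
  "shatters_tree X H Leaf \<longleftrightarrow> H \<noteq> {}"
| "shatters_tree X H (Node x t0 t1) \<longleftrightarrow>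
     x \<in> X \<and> shatters_tree X {h \<in> H. h x = P0} t0 \<and> shatters_tree X {h \<in> H. h x = P1} t1"

definition LD :: "nat set \<Rightarrow> pconcept set \<Rightarrow> int" where
  "LD X H = (if H = {} then -1
     else int (GREATEST k. \<exists>t. complete_depth t k \<and> shatters_tree X H t))"

definition shatters_set :: "pconcept set \<Rightarrow> nat set \<Rightarrow> bool" where
  "shatters_set H S \<longleftrightarrow>
     (\<forall>f :: nat \<Rightarrow> bool. \<exists>h \<in> H. \<forall>x \<in> S. h x = (if f x then P1 else P0))"

definition VC :: "nat set \<Rightarrow> pconcept set \<Rightarrow> nat" where
  "VC X H = (GREATEST k. \<exists>S \<subseteq> X. card S = k \<and> shatters_set H S)"

definition soa_step :: "nat set \<Rightarrow> pconcept set \<Rightarrow> nat \<Rightarrow> pconcept set" where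
  "soa_step X H k = (\<lambda>h.
     if h k = Star \<and> (\<forall>i \<in> {1..<k}. h i \<noteq> Star) then
       h(k := (if LD X {g \<in> H. (\<forall>i \<in> {1..<k}. g i = h i) \<and> g k = P1}
                  > LD X {g \<in> H. (\<forall>i \<in> {1..<k}. g i = h i) \<and> g k = P0}
               then P1 else P0))
     else h) ` H"

definition soa_disamb :: "nat \<Rightarrow> pconcept set \<Rightarrow> pconcept set" where
  "soa_disamb n H = foldl (\<lambda>G k. soa_step {1..n} G k) H [1..<Suc n]"

text \<open>beta m i j: j-th bit (j = 1 most significant) of the m-bit binary
  representation of i-1 (so that i in [2^m] covers all m-bit strings),
  if i <= 2^m; Star otherwise.\<close>
definition beta :: "nat \<Rightarrow> nat \<Rightarrow> nat \<Rightarrow> pval" where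
  "beta m i j = (if i \<le> 2 ^ m then
      (if ((i - 1) div 2 ^ (m - j)) mod 2 = 1 then P1 else P0) else Star)"

definition hij :: "nat \<Rightarrow> nat \<Rightarrow> (nat \<Rightarrow> nat set) \<Rightarrow> nat \<Rightarrow> nat \<Rightarrow> pconcept" where
  "hij r d F i j = (\<lambda>x.
     if x \<in> {1..d * 2 ^ r} then (if x \<in> F i then P1 else P0)
     else if x = d * 2 ^ r + j then beta (d * r) i j
     else Star)"

definition Hrd :: "nat \<Rightarrow> nat \<Rightarrow> (nat \<Rightarrow> nat set) \<Rightarrow> pconcept set" where
  "Hrd r d F = {hij r d F i j | i j.
      i \<in> {1..(d * 2 ^ r) choose d} \<and> j \<in> {1..d * r}}"

end

theory Submission imports Defs Complex_Main begin
lemma bits_exist: "\<forall>f. \<exists>v::nat. v < 2 ^ m \<and> (\<forall>p<m. ((v div 2 ^ p) mod 2 = 1) = f p)"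
proof (induction m)
  case 0 then show ?case by simp
next
  case (Suc m)
  show ?case
  proof
    fix f :: "nat \<Rightarrow> bool"
    obtain v :: nat where v: "v < 2 ^ m" "\<forall>p<m. ((v div 2 ^ p) mod 2 = 1) = f (Suc p)"
      using spec[OF Suc.IH, of "\<lambda>p. f (Suc p)"] by blast
    define w where "w = 2 * v + (if f 0 then 1 else 0)"
    have "w \<le> 2 * v + 1" unfolding w_def by simp
    then have "w < 2 ^ Suc m" using v(1) by simp
    moreover have "\<forall>p<Suc m. ((w div 2 ^ p) mod 2 = 1) = f p"
    proof (intro allI impI)
      fix p assume p: "p < Suc m"
      show "((w div 2 ^ p) mod 2 = 1) = f p"
      proof (cases p)
        case 0 then show ?thesis unfolding w_def by (cases "f 0") simp_all
      next
        case (Suc q)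
        have "(2::nat) ^ p = 2 * 2 ^ q" using Suc by simp
        then have "w div 2 ^ p = (w div 2) div 2 ^ q" by (simp add: div_mult2_eq)
        also have "w div 2 = v" unfolding w_def by (cases "f 0") simp_all
        finally have e: "w div 2 ^ p = v div 2 ^ q" .
        have "q < m" using p Suc by simp
        then have "((v div 2 ^ q) mod 2 = 1) = f (Suc q)" using v(2) by blast
        then show ?thesis using e Suc by simp
      qed
    qed
    ultimately show "\<exists>w::nat. w < 2 ^ Suc m \<and> (\<forall>p<Suc m. ((w div 2 ^ p) mod 2 = 1) = f p)" by blast
  qed
qed

lemma pow_le_choose: "2 ^ (d * r) \<le> (d * 2 ^ r) choose d"
proof (cases "d = 0")
  case True then show ?thesis by simp
next
  case False
  have "d \<le> d * 2 ^ r" by simp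
  from binomial_ge_n_over_k_pow_k[OF this, where 'a=real]
  have "(real (d * 2 ^ r) / real d) ^ d \<le> real ((d * 2 ^ r) choose d)" .
  moreover have "real (d * 2 ^ r) / real d = 2 ^ r" using False by simp
  ultimately have "real ((2::nat) ^ (d * r)) \<le> real ((d * 2 ^ r) choose d)"
    using False by (simp add: power_mult[symmetric] mult.commute)
  then show ?thesis by linarith
qed


lemma shatters_empty: "\<not> shatters_tree X {} t"
  by (induction t) auto


lemma LD_empty: "LD X {} = -1" by (simp add: LD_def)

lemma LD_ge: "LD X H \<ge> -1" by (simp add: LD_def)

lemma LD_ne: "H \<noteq> {} \<Longrightarrow> LD X H \<ge> 0" by (simp add: LD_def)


lemma shatter_P1:
  "(\<forall>h\<in>H. \<forall>a\<in>A. h a = P1) \<Longrightarrow> shatters_tree X H t \<Longrightarrow> complete_depth t k \<Longrightarrow>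
   \<exists>h\<in>H. \<exists>S. finite S \<and> card S = k \<and> S \<inter> A = {} \<and> (\<forall>x\<in>S. h x = P1)"
proof (induction t arbitrary: H A k)
  case Leaf
  then show ?case by (auto intro!: exI[of _ "{}"])
next
  case (Node x t0 t1)
  have xA: "x \<notin> A"
  proof
    assume "x \<in> A"
    then have "{h \<in> H. h x = P0} = {}" using Node.prems(1) by auto
    then show False using Node.prems(2) shatters_empty by (metis shatters_tree.simps(2))
  qed
  have "\<exists>h\<in>{h \<in> H. h x = P1}. \<exists>S. finite S \<and> card S = k - 1 \<and> S \<inter> insert x A = {} \<and> (\<forall>x\<in>S. h x = P1)"
    apply (rule Node.IH(2))
    using Node.prems by auto
  then obtain h S where h: "h \<in> H" "h x = P1" "finite S" "card S = k - 1" "S \<inter> insert x A = {}" "\<forall>x\<in>S. h x = P1"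
    by blast
  have "card (insert x S) = k" using h Node.prems(3) by auto
  then show ?case using h xA by (intro bexI[of _ h] exI[of _ "insert x S"]) auto
qed


lemma Hrd_P1_card:
  assumes bij: "bij_betw F {1..(d * 2 ^ r) choose d} {S. S \<subseteq> {1..d * 2 ^ r} \<and> card S = d}"
    and h: "h \<in> Hrd r d F" and fS: "finite S" and P: "\<forall>x\<in>S. h x = P1"
  shows "card S \<le> d + 1"
proof -
  obtain i j where ij: "h = hij r d F i j" "i \<in> {1..(d * 2 ^ r) choose d}"
    using h unfolding Hrd_def by blast
  have Fi: "F i \<subseteq> {1..d * 2 ^ r}" "card (F i) = d"
    using bij_betwE[OF bij] ij(2) by auto
  have fin: "finite (F i)" using Fi(1) finite_subset by blast
  have "S \<subseteq> insert (d * 2 ^ r + j) (F i)"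
  proof
    fix x assume "x \<in> S"
    then have "h x = P1" using P by blast
    then show "x \<in> insert (d * 2 ^ r + j) (F i)"
      unfolding ij(1) hij_def by (auto split: if_splits)
  qed
  then have "card S \<le> card (insert (d * 2 ^ r + j) (F i))"
    using fin by (intro card_mono) auto
  also have "\<dots> \<le> Suc (card (F i))" using fin by (simp add: card_insert_if)
  finally show ?thesis using Fi(2) by simp
qed

lemma LD_upper:
  assumes bij: "bij_betw F {1..(d * 2 ^ r) choose d} {S. S \<subseteq> {1..d * 2 ^ r} \<and> card S = d}"
  shows "LD X (Hrd r d F) \<le> int d + 1"
proof (cases "Hrd r d F = {}")
  case True then show ?thesis by (simp add: LD_def)
next
  case False
  let ?P = "\<lambda>k. \<exists>t. complete_depth t k \<and> shatters_tree X (Hrd r d F) t"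
  have bnd: "y \<le> d + 1" if "?P y" for y
  proof -
    from that obtain t where t: "complete_depth t y" "shatters_tree X (Hrd r d F) t" by blast
    from shatter_P1[of "Hrd r d F" "{}", OF _ t(2) t(1)]
    obtain h S where "h \<in> Hrd r d F" "finite S" "card S = y" "\<forall>x\<in>S. h x = P1" by auto
    then show ?thesis using Hrd_P1_card[OF bij] by blast
  qed
  have "?P 0" using False by (intro exI[of _ Leaf]) simp
  then have "?P (Greatest ?P)" using bnd by (rule GreatestI_nat)
  then have "Greatest ?P \<le> d + 1" by (rule bnd)
  then show ?thesis using False unfolding LD_def by simp
qed

fun Ttree :: "nat \<Rightarrow> nat \<Rightarrow> mtree" where
  "Ttree 0 s = Leaf"
| "Ttree (Suc k) s = Node (Suc s) (Ttree k (Suc s)) (Ttree k (Suc s))"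

lemma Ttree_depth: "complete_depth (Ttree k s) k"
  by (induction k arbitrary: s) auto

lemma Ttree_shatter:
  assumes bij: "bij_betw F {1..(d * 2 ^ r) choose d} {S. S \<subseteq> {1..d * 2 ^ r} \<and> card S = d}"
    and r: "r \<ge> 1" and d: "d \<ge> 1"
  shows "A \<union> B = {1..s} \<Longrightarrow> A \<inter> B = {} \<Longrightarrow> s + k \<le> d \<Longrightarrow>
    shatters_tree {1..d * (2 ^ r + r)} {h \<in> Hrd r d F. (\<forall>a\<in>A. h a = P1) \<and> (\<forall>b\<in>B. h b = P0)} (Ttree k s)"
proof (induction k arbitrary: A B s)
  case 0
  let ?N = "d * 2 ^ r"
  have finA: "finite A" using 0(1) by (metis finite_Un finite_atLeastAtMost)
  have "A \<subseteq> {1..s}" using 0(1) by (metis Un_upper1)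
  then have Asub: "A \<subseteq> {1..d}" using 0(3) by auto
  have cA: "card A \<le> d" using card_mono[OF _ Asub] by simp
  define E where "E = {d + 1 .. d + (d - card A)}"
  define Fs where "Fs = A \<union> E"
  have "(2::nat) \<le> 2 ^ r" using r by (metis power_one_right power_increasing one_le_numeral)
  then have "d * 2 \<le> ?N" by simp
  then have dN: "d \<le> ?N" "d + (d - card A) \<le> ?N" by linarith+
  have "{1..d} \<subseteq> {1..?N}" using dN(1) by simp
  then have "A \<subseteq> {1..?N}" using Asub by (rule subset_trans[rotated])
  moreover have "E \<subseteq> {1..?N}" using dN(2) unfolding E_def by simp
  ultimately have Fsub: "Fs \<subseteq> {1..?N}" unfolding Fs_def by blast
  have "A \<inter> E = {}" using Asub unfolding E_def by auto
  then have "card Fs = d" unfolding Fs_def using finA cA by (simp add: card_Un_disjoint E_def)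
  then have "Fs \<in> F ` {1..?N choose d}" using Fsub bij_betw_imp_surj_on[OF bij] by auto
  then obtain i where i: "i \<in> {1..?N choose d}" "F i = Fs" by blast
  have j: "(1::nat) \<in> {1..d * r}" using r d by simp
  have "hij r d F i 1 \<in> Hrd r d F" unfolding Hrd_def using i(1) j by blast
  moreover have "\<forall>a\<in>A. hij r d F i 1 a = P1"
    using Asub Fsub \<open>d * 2 \<le> ?N\<close> i(2) unfolding hij_def Fs_def by auto
  moreover have "\<forall>b\<in>B. hij r d F i 1 b = P0"
  proof
    fix b assume b: "b \<in> B"
    then have "b \<in> {1..s}" "b \<notin> A" using 0 by auto
    then have "b \<le> s" by simp
    then have "b \<le> ?N" using 0(3) dN(1) by linarith
    then have "b \<in> {1..?N}" "b \<notin> Fs" using \<open>b \<in> {1..s}\<close> \<open>b \<notin> A\<close> 0(3) unfolding Fs_def E_def by auto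
    then show "hij r d F i 1 b = P0" using i(2) unfolding hij_def by auto
  qed
  ultimately show ?case by auto
next
  case (Suc k)
  have "1 \<le> 2 ^ r + r" using r by simp
  then have dd: "d \<le> d * (2 ^ r + r)" by (metis mult.right_neutral mult_le_mono2)
  have "Suc s \<le> d * (2 ^ r + r)" using dd Suc.prems(3) by linarith
  then have X: "Suc s \<in> {1..d * (2 ^ r + r)}" by simp
  have e0: "{h \<in> {h \<in> Hrd r d F. (\<forall>a\<in>A. h a = P1) \<and> (\<forall>b\<in>B. h b = P0)}. h (Suc s) = P0}
      = {h \<in> Hrd r d F. (\<forall>a\<in>A. h a = P1) \<and> (\<forall>b\<in>insert (Suc s) B. h b = P0)}" by auto
  have e1: "{h \<in> {h \<in> Hrd r d F. (\<forall>a\<in>A. h a = P1) \<and> (\<forall>b\<in>B. h b = P0)}. h (Suc s) = P1}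
      = {h \<in> Hrd r d F. (\<forall>a\<in>insert (Suc s) A. h a = P1) \<and> (\<forall>b\<in>B. h b = P0)}" by auto
  have "Suc s \<notin> {1..s}" by simp
  then have nAB: "Suc s \<notin> A" "Suc s \<notin> B" using Suc.prems(1) by blast+
  have s0: "shatters_tree {1..d * (2 ^ r + r)} {h \<in> Hrd r d F. (\<forall>a\<in>A. h a = P1) \<and> (\<forall>b\<in>insert (Suc s) B. h b = P0)} (Ttree k (Suc s))"
    using Suc.prems nAB by (intro Suc.IH) auto
  have s1: "shatters_tree {1..d * (2 ^ r + r)} {h \<in> Hrd r d F. (\<forall>a\<in>insert (Suc s) A. h a = P1) \<and> (\<forall>b\<in>B. h b = P0)} (Ttree k (Suc s))"
    using Suc.prems nAB by (intro Suc.IH) auto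
  show ?case using X s0 s1 by (simp only: Ttree.simps shatters_tree.simps e0 e1)
qed

lemma LD_lower:
  assumes bij: "bij_betw F {1..(d * 2 ^ r) choose d} {S. S \<subseteq> {1..d * 2 ^ r} \<and> card S = d}"
    and r: "r \<ge> 1" and d: "d \<ge> 1"
  shows "int d \<le> LD {1..d * (2 ^ r + r)} (Hrd r d F)"
proof -
  let ?X = "{1..d * (2 ^ r + r)}"
  let ?P = "\<lambda>k. \<exists>t. complete_depth t k \<and> shatters_tree ?X (Hrd r d F) t"
  have sh: "shatters_tree ?X {h \<in> Hrd r d F. (\<forall>a\<in>{}. h a = P1) \<and> (\<forall>b\<in>{}. h b = P0)} (Ttree d 0)"
    by (rule Ttree_shatter[OF bij r d]) auto
  then have sh': "shatters_tree ?X (Hrd r d F) (Ttree d 0)" by simp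
  then have ne: "Hrd r d F \<noteq> {}" using shatters_empty by metis
  have Pd: "?P d" using sh' Ttree_depth by blast
  have bnd: "y \<le> d + 1" if "?P y" for y
  proof -
    from that obtain t where t: "complete_depth t y" "shatters_tree ?X (Hrd r d F) t" by blast
    from shatter_P1[of "Hrd r d F" "{}", OF _ t(2) t(1)]
    obtain h S where "h \<in> Hrd r d F" "finite S" "card S = y" "\<forall>x\<in>S. h x = P1" by auto
    then show ?thesis using Hrd_P1_card[OF bij] by blast
  qed
  have "d \<le> Greatest ?P" using Pd bnd by (rule Greatest_le_nat)
  then show ?thesis using ne unfolding LD_def by simp
qed

definition fillv :: "nat \<Rightarrow> nat \<Rightarrow> nat \<Rightarrow> pval" where
  "fillv m i l = (if i \<le> 2 ^ m then beta m i l else P0)"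

definition gk :: "nat \<Rightarrow> nat \<Rightarrow> (nat \<Rightarrow> nat set) \<Rightarrow> nat \<Rightarrow> nat \<Rightarrow> nat \<Rightarrow> pconcept" where
  "gk r d F i j k = (\<lambda>x. if x \<in> {1..d * 2 ^ r} then (if x \<in> F i then P1 else P0)
     else if d * 2 ^ r < x \<and> x \<le> k then fillv (d * r) i (x - d * 2 ^ r)
     else if x = d * 2 ^ r + j then beta (d * r) i j else Star)"

definition Gk :: "nat \<Rightarrow> nat \<Rightarrow> (nat \<Rightarrow> nat set) \<Rightarrow> nat \<Rightarrow> pconcept set" where
  "Gk r d F k = (\<lambda>(i, j). gk r d F i j k) ` ({1..(d * 2 ^ r) choose d} \<times> {1..d * r})"

definition soa_fun :: "nat set \<Rightarrow> pconcept set \<Rightarrow> nat \<Rightarrow> pconcept \<Rightarrow> pconcept" where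
  "soa_fun X H k h =
     (if h k = Star \<and> (\<forall>i \<in> {1..<k}. h i \<noteq> Star) then
       h(k := (if LD X {g \<in> H. (\<forall>i \<in> {1..<k}. g i = h i) \<and> g k = P1}
                  > LD X {g \<in> H. (\<forall>i \<in> {1..<k}. g i = h i) \<and> g k = P0}
               then P1 else P0))
     else h)"

lemma soa_step_alt: "soa_step X H k = soa_fun X H k ` H"
  unfolding soa_step_def soa_fun_def by (rule refl)

lemma fillv_ns: "fillv m i l \<noteq> Star"
  unfolding fillv_def beta_def by auto

lemma Hrd_G0: "Hrd r d F = Gk r d F 0"
proof -
  have e: "hij r d F i j = gk r d F i j 0" for i j
    unfolding hij_def gk_def by (rule ext) auto
  show ?thesis unfolding Hrd_def Gk_def e by (auto; blast)
qed

lemma gk_mem: "i \<in> {1..(d * 2 ^ r) choose d} \<Longrightarrow> j \<in> {1..d * r} \<Longrightarrow> gk r d F i j k \<in> Gk r d F k"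
  unfolding Gk_def by force

lemma step_pt:
  assumes inj: "inj_on F {1..(d * 2 ^ r) choose d}"
    and sub: "\<forall>i \<in> {1..(d * 2 ^ r) choose d}. F i \<subseteq> {1..d * 2 ^ r}"
    and i: "i \<in> {1..(d * 2 ^ r) choose d}" and j: "j \<in> {1..d * r}"
    and kl: "k' < d * 2 ^ r + d * r"
  shows "soa_fun X (Gk r d F k') (Suc k') (gk r d F i j k') = gk r d F i j (Suc k')"
proof -
  define N where "N = d * 2 ^ r"
  define m where "m = d * r"
  define k where "k = Suc k'"
  define h where "h = gk r d F i j k'"
  have hval: "h x = (if x \<in> {1..N} then (if x \<in> F i then P1 else P0)
     else if N < x \<and> x \<le> k' then fillv m i (x - N)
     else if x = N + j then beta m i j else Star)" for x
    unfolding h_def gk_def N_def m_def by simp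
  have gval: "gk r d F i2 j2 kk x = (if x \<in> {1..N} then (if x \<in> F i2 then P1 else P0)
     else if N < x \<and> x \<le> kk then fillv m i2 (x - N)
     else if x = N + j2 then beta m i2 j2 else Star)" for x i2 j2 kk
    unfolding gk_def N_def m_def by simp
  have prev: "\<forall>x \<in> {1..<k}. h x \<noteq> Star"
    unfolding k_def hval using fillv_ns by auto
  show ?thesis
  proof (cases "k \<le> N")
    case True
    have "h k \<noteq> Star" unfolding hval using True k_def by auto
    then have "soa_fun X (Gk r d F k') (Suc k') h = h" unfolding soa_fun_def k_def by simp
    moreover have "h = gk r d F i j k"
      unfolding h_def by (rule ext) (use True k_def in \<open>auto simp: gval\<close>)
    ultimately show ?thesis unfolding h_def k_def by simp
  next
    case False
    define l where "l = k - N"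
    have kN: "k = N + l" "1 \<le> l" "l \<le> m" using False kl unfolding l_def k_def N_def m_def by auto
    have hk: "h k = (if l = j then beta m i j else Star)"
      unfolding hval using kN k_def by auto
    show ?thesis
    proof (cases "h k = Star")
      case False
      then have lj: "l = j" and b: "beta m i j \<noteq> Star" using hk by (auto split: if_splits)
      then have "i \<le> 2 ^ m" unfolding beta_def by (auto split: if_splits)
      then have fb: "fillv m i l = beta m i j" using lj unfolding fillv_def by simp
      have "soa_fun X (Gk r d F k') (Suc k') h = h" using False unfolding soa_fun_def k_def by simp
      moreover have "h = gk r d F i j k"
      proof (rule ext)
        fix x show "h x = gk r d F i j k x"
        proof (cases "x = k")
          case True
          then show ?thesis using kN fb lj hk unfolding gval by auto
        next
          case False
          then show ?thesis unfolding h_def gval using k_def by auto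
        qed
      qed
      ultimately show ?thesis unfolding h_def k_def by simp
    next
      case True
      define S where "S v = {g \<in> Gk r d F k'. (\<forall>x \<in> {1..<k}. g x = h x) \<and> g k = v}" for v
      have Sne: "S v \<noteq> {} \<longleftrightarrow> beta m i l = v" if v: "v \<noteq> Star" for v
      proof
        assume "S v \<noteq> {}"
        then obtain g where g: "g \<in> Gk r d F k'" "\<forall>x \<in> {1..<k}. g x = h x" "g k = v"
          unfolding S_def by blast
        then obtain i2 j2 where ij2: "i2 \<in> {1..(d * 2 ^ r) choose d}" "j2 \<in> {1..d * r}"
          "g = gk r d F i2 j2 k'" unfolding Gk_def by auto
        have "F i2 = F i"
        proof -
          have "\<forall>x \<in> {1..N}. (x \<in> F i2) = (x \<in> F i)"
          proof
            fix x assume x: "x \<in> {1..N}"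
            then have "x \<in> {1..<k}" using kN by auto
            then have "g x = h x" using g(2) by blast
            then show "(x \<in> F i2) = (x \<in> F i)" using x unfolding ij2(3) gval hval
              by (auto split: if_splits)
          qed
          moreover have "F i2 \<subseteq> {1..N}" "F i \<subseteq> {1..N}" using sub ij2(1) i unfolding N_def by auto
          ultimately show ?thesis by blast
        qed
        then have "i2 = i" using inj ij2(1) i by (meson inj_onD)
        then have "g k = (if l = j2 then beta m i l else Star)"
          unfolding ij2(3) gval using kN k_def by auto
        then show "beta m i l = v" using g(3) v by (auto split: if_splits)
      next
        assume b: "beta m i l = v"
        have l: "l \<in> {1..d * r}" using kN unfolding m_def by auto
        have "gk r d F i l k' \<in> S v"
          unfolding S_def
        proof (intro CollectI conjI ballI)
          show "gk r d F i l k' \<in> Gk r d F k'" by (rule gk_mem[OF i l])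
          show "gk r d F i l k' x = h x" if "x \<in> {1..<k}" for x
            using that kN k_def unfolding gval hval by auto
          show "gk r d F i l k' k = v" using kN k_def b unfolding gval by auto
        qed
        then show "S v \<noteq> {}" by blast
      qed
      have c: "(if LD X (S P1) > LD X (S P0) then P1 else P0) = fillv m i l"
      proof (cases "beta m i l = P1")
        case True
        then have "S P1 \<noteq> {}" "S P0 = {}" using Sne by auto
        then have "LD X (S P1) > LD X (S P0)" using LD_ne[of "S P1" X] LD_empty[of X] by simp
        moreover have "i \<le> 2 ^ m" using True unfolding beta_def by (auto split: if_splits)
        ultimately show ?thesis using True unfolding fillv_def by simp
      next
        case False
        then have "S P1 = {}" using Sne by auto
        then have "\<not> LD X (S P1) > LD X (S P0)" using LD_ge[of X "S P0"] LD_empty[of X] by simp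
        moreover have "fillv m i l = P0" using False unfolding fillv_def beta_def by (auto split: if_splits)
        ultimately show ?thesis by simp
      qed
      have "soa_fun X (Gk r d F k') (Suc k') h = h(k := fillv m i l)"
        using True prev c unfolding soa_fun_def S_def k_def by simp
      moreover have "h(k := fillv m i l) = gk r d F i j k"
      proof (rule ext)
        fix x show "(h(k := fillv m i l)) x = gk r d F i j k x"
        proof (cases "x = k")
          case True
          then show ?thesis using kN unfolding gval by auto
        next
          case False
          then show ?thesis unfolding h_def gval using k_def by auto
        qed
      qed
      ultimately show ?thesis unfolding h_def k_def by simp
    qed
  qed
qed

lemma image_eq_on: "A = f ` D \<Longrightarrow> (\<And>x. x \<in> D \<Longrightarrow> \<phi> (f x) = g x) \<Longrightarrow> \<phi> ` A = g ` D"
  by (simp add: image_image cong: image_cong)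

lemma step_set:
  assumes inj: "inj_on F {1..(d * 2 ^ r) choose d}"
    and sub: "\<forall>i \<in> {1..(d * 2 ^ r) choose d}. F i \<subseteq> {1..d * 2 ^ r}"
    and kl: "k' < d * 2 ^ r + d * r"
  shows "soa_step X (Gk r d F k') (Suc k') = Gk r d F (Suc k')"
  unfolding soa_step_alt
  unfolding Gk_def[of r d F "Suc k'"]
  by (rule image_eq_on[OF Gk_def[of r d F k']]) (auto intro!: step_pt[OF inj sub _ _ kl])

lemma fold_G:
  assumes inj: "inj_on F {1..(d * 2 ^ r) choose d}"
    and sub: "\<forall>i \<in> {1..(d * 2 ^ r) choose d}. F i \<subseteq> {1..d * 2 ^ r}"
  shows "k \<le> d * 2 ^ r + d * r \<Longrightarrow> foldl (\<lambda>G k. soa_step X G k) (Hrd r d F) [1..<Suc k] = Gk r d F k"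
proof (induction k)
  case 0 then show ?case by (simp add: Hrd_G0)
next
  case (Suc k)
  have "[1..<Suc (Suc k)] = [1..<Suc k] @ [Suc k]" by simp
  then show ?case using Suc step_set[OF inj sub, of k X] by simp
qed

theorem mainTheorem5:
  fixes r d :: nat and F :: "nat \<Rightarrow> nat set"
  assumes "r \<ge> 1" and "d \<ge> 1"
    and "bij_betw F {1..(d * 2 ^ r) choose d} {S. S \<subseteq> {1..d * 2 ^ r} \<and> card S = d}"
  shows "int d \<le> LD {1..d * (2 ^ r + r)} (Hrd r d F)
     \<and> LD {1..d * (2 ^ r + r)} (Hrd r d F) \<le> int d + 1
     \<and> shatters_set (soa_disamb (d * (2 ^ r + r)) (Hrd r d F))
          {d * 2 ^ r + 1 .. d * 2 ^ r + d * r}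
     \<and> VC {1..d * (2 ^ r + r)} (soa_disamb (d * (2 ^ r + r)) (Hrd r d F)) \<ge> d * r"
proof -
  note r = assms(1) and d = assms(2) and bij = assms(3)
  define N where "N = d * 2 ^ r"
  define m where "m = d * r"
  have n: "d * (2 ^ r + r) = N + m" unfolding N_def m_def by (simp add: distrib_left)
  have inj: "inj_on F {1..(d * 2 ^ r) choose d}" using bij bij_betw_def by blast
  have sub: "\<forall>i \<in> {1..(d * 2 ^ r) choose d}. F i \<subseteq> {1..d * 2 ^ r}"
    using bij_betwE[OF bij] by auto
  have G: "soa_disamb (d * (2 ^ r + r)) (Hrd r d F) = Gk r d F (N + m)"
    unfolding soa_disamb_def n using fold_G[OF inj sub, of "N + m"] unfolding N_def m_def by simp
  have sh: "shatters_set (Gk r d F (N + m)) {N + 1 .. N + m}"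
    unfolding shatters_set_def
  proof
    fix f :: "nat \<Rightarrow> bool"
    obtain v :: nat where v: "v < 2 ^ m" "\<forall>p<m. ((v div 2 ^ p) mod 2 = 1) = f (N + m - p)"
      using spec[OF bits_exist[of m], of "\<lambda>p. f (N + m - p)"] by blast
    have "2 ^ m \<le> N choose d" unfolding N_def m_def by (rule pow_le_choose)
    then have i: "Suc v \<in> {1..(d * 2 ^ r) choose d}" using v(1) unfolding N_def by simp
    have j: "(1::nat) \<in> {1..d * r}" using r d by simp
    have "\<forall>x\<in>{N + 1..N + m}. gk r d F (Suc v) 1 (N + m) x = (if f x then P1 else P0)"
    proof
      fix x assume x: "x \<in> {N + 1..N + m}"
      have "gk r d F (Suc v) 1 (N + m) x = fillv m (Suc v) (x - N)"
        using x unfolding gk_def N_def m_def by auto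
      also have "\<dots> = beta m (Suc v) (x - N)" using v(1) unfolding fillv_def by simp
      also have "\<dots> = (if (v div 2 ^ (m - (x - N))) mod 2 = 1 then P1 else P0)"
        using v(1) unfolding beta_def by simp
      also have "\<dots> = (if f x then P1 else P0)"
      proof -
        have "m - (x - N) < m" using x by auto
        moreover have "N + m - (m - (x - N)) = x" using x by auto
        ultimately show ?thesis using v(2) by metis
      qed
      finally show "gk r d F (Suc v) 1 (N + m) x = (if f x then P1 else P0)" .
    qed
    then show "\<exists>h\<in>Gk r d F (N + m). \<forall>x\<in>{N + 1..N + m}. h x = (if f x then P1 else P0)"
      using gk_mem[OF i j] by blast
  qed
  have vc: "VC {1..N + m} (Gk r d F (N + m)) \<ge> m"
  proof -
    let ?P = "\<lambda>k. \<exists>S \<subseteq> {1..N + m}. card S = k \<and> shatters_set (Gk r d F (N + m)) S"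
    have "?P m" using sh by (intro exI[of _ "{N + 1 .. N + m}"]) auto
    moreover have "y \<le> N + m" if "?P y" for y
    proof -
      from that obtain S where "S \<subseteq> {1..N + m}" "card S = y" by blast
      then show ?thesis using card_mono[of "{1..N + m}" S] by simp
    qed
    ultimately have "m \<le> Greatest ?P" by (rule Greatest_le_nat)
    then show ?thesis unfolding VC_def .
  qed
  show ?thesis
    using LD_lower[OF bij r d] LD_upper[OF bij] sh vc G n unfolding N_def m_def by simp
qed
end
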